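(* Let $G$ be a profinite group and let $\psi$ be an expansion map for $G$ with support $A$ and pointer $\chi_0$. Then for all $\sigma_1,\dots,\sigma_{\#A}\in G$, $$\phi_{A\setminus\{\chi_0\}}(\psi)\big([\sigma_1,[\sigma_2,[\dots,[\sigma_{\#A-1},\sigma_{\#A}]\dots]]]\big)=\sum_{f}\prod_{s=1}^{\#A}f(s)(\sigma_s),$$ where the sum runs over all bijections $f:\{1,\dots,\#A\}\to A$ with $f(\#A-1)=\chi_0$ or $f(\#A)=\chi_0$.
   Context: Let $A$ be a finite $\mathbb{F}_2$-linearly independent set of continuous homomorphisms $G\to\mathbb{F}_2$ with $\#A\geq2$, and $\chi_0\in A$. Let $W=\mathbb{F}_2^{A\setminus\{\chi_0\}}$ with basis $(e_\chi)_{\chi\in A\setminus\{\chi_0\}}$, and let $W$ act on the group algebra $\mathbb{F}_2[W]$ by multiplication by group elements, forming $\mathbb{F}_2[W]\rtimes W$. An expansion map for $G$ with support $A$ and pointer $\chi_0$ is a continuous homomorphism $\psi:G\to\mathbb{F}_2[W]\rtimes W$ such that for each $\chi\in A\setminus\{\chi_0\}$ the $\chi$-coordinate of the $W$-component of $\psi$ equals $\chi$, and $\varepsilon\circ(\text{first component of }\psi)=\chi_0$, where $\varepsilon$ is the augmentation of $\mathbb{F}_2[W]$ (this composite is the unique nontrivial character of $\mathbb{F}_2[W]\rtimes W$ trivial on $\{0\}\rtimes W$). Writing $t_\chi=1+[e_\chi]\in\mathbb{F}_2[W]$ and $t_B=\prod_{\chi\in B}t_\chi$ for $B\subseteq A\setminus\{\chi_0\}$,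 the $t_B$ form a basis of $\mathbb{F}_2[W]$, and $\phi_B(\psi):G\to\mathbb{F}_2$ denotes the coefficient of $t_B$ in the first component of $\psi$. Commutators are $[a,b]=aba^{-1}b^{-1}$. *)

theory Defs
  imports "HOL-Analysis.Analysis" "HOL-Algebra.Group" "HOL-Library.Z2" "HOL-Library.FuncSet"
begin

text \<open>F_2 is the field type bit.  G is a group in the HOL-Algebra sense together with a
topology T on its carrier.\<close>

definition profinite_group :: "('g, 'b) monoid_scheme \<Rightarrow> 'g topology \<Rightarrow> bool" where
  "profinite_group G T \<longleftrightarrow> group G \<and> topspace T = carrier G
     \<and> continuous_map (prod_topology T T) T (\<lambda>(x, y). x \<otimes>\<^bsub>G\<^esub> y)
     \<and> continuous_map T T (\<lambda>x. inv\<^bsub>G\<^esub> x)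
     \<and> compact_space T \<and> Hausdorff_space T
     \<and> (\<forall>x \<in> topspace T. connected_component_of_set T x = {x})"

definition cont_char :: "('g, 'b) monoid_scheme \<Rightarrow> 'g topology \<Rightarrow> ('g \<Rightarrow> bit) \<Rightarrow> bool" where
  "cont_char G T chi \<longleftrightarrow> (\<forall>x \<in> carrier G. \<forall>y \<in> carrier G. chi (x \<otimes>\<^bsub>G\<^esub> y) = chi x + chi y)
     \<and> continuous_map T (discrete_topology (UNIV :: bit set)) chi"

text \<open>F_2-linear independence of a finite set of functions on carrier G: no nonempty
subfamily sums to the zero function on G (over F_2 linear combinations are subset sums).\<close>
definition F2_lin_indep :: "('g, 'b) monoid_scheme \<Rightarrow> ('g \<Rightarrow> bit) set \<Rightarrow> bool" where
  "F2_lin_indep G A \<longleftrightarrow> (\<forall>B \<subseteq> A. B \<noteq> {} \<longrightarrow> (\<exists>x \<in> carrier G. (\<Sum>chi\<in>B. chi x) \<noteq> 0))"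

text \<open>W = F_2^S, S = A - {chi_0}, as functions S -> F_2 extended by 0.\<close>
type_synonym 'c vecW = "'c \<Rightarrow> bit"
type_synonym 'c grpalg = "'c vecW \<Rightarrow> bit"

definition Wset :: "'c set \<Rightarrow> 'c vecW set" where
  "Wset S = {w. \<forall>c. c \<notin> S \<longrightarrow> w c = 0}"

definition Wadd :: "'c vecW \<Rightarrow> 'c vecW \<Rightarrow> 'c vecW" where
  "Wadd v w = (\<lambda>c. v c + w c)"

definition Wneg :: "'c vecW \<Rightarrow> 'c vecW" where
  "Wneg v = (\<lambda>c. - v c)"

definition basis_e :: "'c \<Rightarrow> 'c vecW" where
  "basis_e c = (\<lambda>c'. if c' = c then 1 else 0)"

text \<open>Group algebra F_2[W]: functions W -> F_2 vanishing outside W.\<close>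
definition GA :: "'c set \<Rightarrow> 'c grpalg set" where
  "GA S = {p. \<forall>v. v \<notin> Wset S \<longrightarrow> p v = 0}"

definition delta :: "'c vecW \<Rightarrow> 'c grpalg" where
  "delta w = (\<lambda>v. if v = w then 1 else 0)"

definition GAadd :: "'c grpalg \<Rightarrow> 'c grpalg \<Rightarrow> 'c grpalg" where
  "GAadd p q = (\<lambda>v. p v + q v)"

definition GAmul :: "'c set \<Rightarrow> 'c grpalg \<Rightarrow> 'c grpalg \<Rightarrow> 'c grpalg" where
  "GAmul S p q = (\<lambda>v. if v \<in> Wset S then (\<Sum>w\<in>Wset S. p w * q (Wadd v (Wneg w))) else 0)"

definition augm :: "'c set \<Rightarrow> 'c grpalg \<Rightarrow> bit" where
  "augm S p = (\<Sum>w\<in>Wset S. p w)"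

text \<open>The semidirect product F_2[W] \<rtimes> W, W acting by multiplication by group elements.\<close>
definition semidir :: "'c set \<Rightarrow> ('c grpalg \<times> 'c vecW) monoid" where
  "semidir S = \<lparr> carrier = GA S \<times> Wset S,
     mult = (\<lambda>(p, w) (q, v). (GAadd p (GAmul S (delta w) q), Wadd w v)),
     one = (\<lambda>_. 0, \<lambda>_. 0) \<rparr>"

definition t_chi :: "'c set \<Rightarrow> 'c \<Rightarrow> 'c grpalg" where
  "t_chi S c = GAadd (delta (\<lambda>_. 0)) (delta (basis_e c))"

definition t_B :: "'c set \<Rightarrow> 'c set \<Rightarrow> 'c grpalg" where
  "t_B S B = Finite_Set.fold (\<lambda>c acc. GAmul S (t_chi S c) acc) (delta (\<lambda>_. 0)) B"

definition coeff_t :: "'c set \<Rightarrow> 'c grpalg \<Rightarrow> 'c set \<Rightarrow> bit" where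
  "coeff_t S p B = (THE c. (\<forall>B'. \<not> B' \<subseteq> S \<longrightarrow> c B' = 0)
                          \<and> p = (\<lambda>v. \<Sum>B'\<in>Pow S. c B' * t_B S B' v)) B"

definition expansion_map ::
  "('g, 'b) monoid_scheme \<Rightarrow> 'g topology \<Rightarrow> ('g \<Rightarrow> bit) set \<Rightarrow> ('g \<Rightarrow> bit)
     \<Rightarrow> ('g \<Rightarrow> ('g \<Rightarrow> bit) grpalg \<times> ('g \<Rightarrow> bit) vecW) \<Rightarrow> bool" where
  "expansion_map G T A chi0 \<psi> \<longleftrightarrow>
     finite A \<and> 2 \<le> card A \<and> chi0 \<in> A \<and> (\<forall>chi\<in>A. cont_char G T chi) \<and> F2_lin_indep G A
     \<and> \<psi> \<in> hom G (semidir (A - {chi0}))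
     \<and> continuous_map T (discrete_topology (carrier (semidir (A - {chi0})))) \<psi>
     \<and> (\<forall>chi \<in> A - {chi0}. \<forall>\<sigma> \<in> carrier G. snd (\<psi> \<sigma>) chi = chi \<sigma>)
     \<and> (\<forall>\<sigma> \<in> carrier G. augm (A - {chi0}) (fst (\<psi> \<sigma>)) = chi0 \<sigma>)"

definition phi :: "('g \<Rightarrow> bit) set \<Rightarrow> ('g \<Rightarrow> bit) set
     \<Rightarrow> ('g \<Rightarrow> ('g \<Rightarrow> bit) grpalg \<times> ('g \<Rightarrow> bit) vecW) \<Rightarrow> 'g \<Rightarrow> bit" where
  "phi S B \<psi> \<sigma> = coeff_t S (fst (\<psi> \<sigma>)) B"

definition commutator :: "('g, 'b) monoid_scheme \<Rightarrow> 'g \<Rightarrow> 'g \<Rightarrow> 'g" where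
  "commutator G a b = a \<otimes>\<^bsub>G\<^esub> b \<otimes>\<^bsub>G\<^esub> inv\<^bsub>G\<^esub> a \<otimes>\<^bsub>G\<^esub> inv\<^bsub>G\<^esub> b"

fun nested_comm :: "('g, 'b) monoid_scheme \<Rightarrow> 'g list \<Rightarrow> 'g" where
  "nested_comm G [] = \<one>\<^bsub>G\<^esub>"
| "nested_comm G [x] = x"
| "nested_comm G (x # y # zs) = commutator G x (nested_comm G (y # zs))"

end

theory Submission
  imports Defs
begin

declare add_bit_eq_xor[simp del] mult_bit_eq_and[simp del]

lemma bit_add_self[simp]: "(x::bit) + x = 0" by (cases x) simp_all
lemma bit_add_self2[simp]: "(x::bit) + (x + y) = y" by (cases x; cases y) simp_all

definition ind :: "'c set \<Rightarrow> 'c \<Rightarrow> bit" where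
  "ind X = (\<lambda>c. if c \<in> X then 1 else 0)"

definition sh :: "'c set \<Rightarrow> 'c vecW \<Rightarrow> 'c grpalg \<Rightarrow> 'c grpalg" where
  "sh S w q = (\<lambda>v. if v \<in> Wset S then q (Wadd v w) else 0)"

definition Dop :: "'c set \<Rightarrow> 'c vecW \<Rightarrow> 'c grpalg \<Rightarrow> 'c grpalg" where
  "Dop S u r = (\<lambda>z. if z \<in> Wset S then r z + r (Wadd z u) else 0)"

lemma ind_inj: "ind X = ind Y \<Longrightarrow> X = Y"
  unfolding ind_def by (auto simp: fun_eq_iff split: if_splits)

lemma ind_in_Wset: "X \<subseteq> S \<Longrightarrow> ind X \<in> Wset S"
  unfolding ind_def Wset_def by auto

lemma Wset_eq_ind: "w \<in> Wset S \<Longrightarrow> w = ind {c\<in>S. w c = 1}"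
  unfolding ind_def Wset_def by (auto simp: fun_eq_iff)

lemma Wset_image: "Wset S = ind ` Pow S"
proof
  show "Wset S \<subseteq> ind ` Pow S"
  proof
    fix w assume "w \<in> Wset S"
    then have "w = ind {c\<in>S. w c = 1}" by (rule Wset_eq_ind)
    then show "w \<in> ind ` Pow S" by blast
  qed
qed (auto intro: ind_in_Wset)

lemma finite_Wset: "finite S \<Longrightarrow> finite (Wset S)"
  by (simp add: Wset_image)

lemma Wadd_in: "v \<in> Wset S \<Longrightarrow> w \<in> Wset S \<Longrightarrow> Wadd v w \<in> Wset S"
  unfolding Wset_def Wadd_def by auto

lemma Wadd_assoc: "Wadd (Wadd a b) c = Wadd a (Wadd b c)"
  unfolding Wadd_def by (simp add: add.assoc)
lemma Wadd_comm: "Wadd a b = Wadd b a"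
  unfolding Wadd_def by (simp add: add.commute)
lemma Wadd_self: "Wadd a a = (\<lambda>_. 0)"
  unfolding Wadd_def by simp
lemma Wadd_zero[simp]: "Wadd a (\<lambda>_. 0) = a"
  unfolding Wadd_def by simp
lemma Wadd_cancel[simp]: "Wadd (Wadd a b) b = a"
  unfolding Wadd_def by (simp add: add.assoc)
lemma Wneg_id[simp]: "Wneg a = a"
  unfolding Wneg_def by simp
lemma zero_in_Wset[simp]: "(\<lambda>_. 0) \<in> Wset S"
  unfolding Wset_def by simp
lemma basis_e_ind: "basis_e c = ind {c}"
  unfolding basis_e_def ind_def by auto
lemma Wadd_ind: "Wadd (ind X) (ind Y) = ind (X - Y \<union> (Y - X))"
  unfolding Wadd_def ind_def by (auto simp: fun_eq_iff)

lemma GAmul_delta: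
  assumes "finite S" "w \<in> Wset S"
  shows "GAmul S (delta w) q = sh S w q"
proof -
  have "(\<Sum>w'\<in>Wset S. delta w w' * q (Wadd v (Wneg w'))) = q (Wadd v w)" for v
  proof -
    have "(\<Sum>w'\<in>Wset S. delta w w' * q (Wadd v (Wneg w'))) =
          (\<Sum>w'\<in>Wset S. if w' = w then q (Wadd v w') else 0)"
      by (rule sum.cong) (auto simp: delta_def)
    also have "\<dots> = q (Wadd v w)" using assms by (simp add: sum.delta' finite_Wset)
    finally show ?thesis .
  qed
  then show ?thesis unfolding GAmul_def sh_def by auto
qed

lemma GAmul_add_left:
  "GAmul S (GAadd a b) q = (\<lambda>v. GAmul S a q v + GAmul S b q v)"
  unfolding GAmul_def GAadd_def by (auto simp: fun_eq_iff distrib_right sum.distrib)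

lemma GAmul_tchi:
  assumes "finite S" "c \<in> S"
  shows "GAmul S (t_chi S c) q = Dop S (basis_e c) q"
proof -
  have e: "basis_e c \<in> Wset S" using assms by (simp add: basis_e_ind ind_in_Wset)
  show ?thesis unfolding t_chi_def GAmul_add_left
    using GAmul_delta[OF assms(1) e] GAmul_delta[OF assms(1) zero_in_Wset]
    by (auto simp: Dop_def sh_def fun_eq_iff)
qed

lemma Dop_comm:
  assumes "u \<in> Wset S" "u' \<in> Wset S"
  shows "Dop S u (Dop S u' r) = Dop S u' (Dop S u r)"
proof -
  have "Dop S u (Dop S u' r) z = Dop S u' (Dop S u r) z" for z
  proof (cases "z \<in> Wset S")
    case True
    then have a: "Wadd z u \<in> Wset S" "Wadd z u' \<in> Wset S" using assms Wadd_in by auto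
    have b: "Wadd (Wadd z u) u' = Wadd (Wadd z u') u"
      by (metis Wadd_assoc Wadd_comm)
    show ?thesis using True a b by (simp add: Dop_def algebra_simps)
  qed (simp add: Dop_def)
  then show ?thesis by auto
qed

lemma tt_ind:
  assumes "finite S" "B \<subseteq> S"
  shows "t_B S B = (\<lambda>v. if v \<in> Wset B then 1 else 0)"
proof -
  interpret cf: comp_fun_commute_on S "\<lambda>c acc. GAmul S (t_chi S c) acc"
  proof
    fix x y assume xy: "x \<in> S" "y \<in> S"
    have "basis_e x \<in> Wset S" "basis_e y \<in> Wset S" using xy by (auto simp: basis_e_ind ind_in_Wset)
    then show "(\<lambda>acc. GAmul S (t_chi S y) acc) \<circ> (\<lambda>acc. GAmul S (t_chi S x) acc) =
               (\<lambda>acc. GAmul S (t_chi S x) acc) \<circ> (\<lambda>acc. GAmul S (t_chi S y) acc)"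
      using xy assms(1) by (auto simp: GAmul_tchi fun_eq_iff Dop_comm)
  qed
  have "finite B" using assms finite_subset by blast
  from this assms(2) show ?thesis
  proof (induction B rule: finite_induct)
    case empty
    then show ?case unfolding t_B_def by (auto simp: delta_def Wset_def fun_eq_iff)
  next
    case (insert c B)
    have "t_B S (insert c B) = GAmul S (t_chi S c) (t_B S B)"
      unfolding t_B_def using insert by (simp add: cf.fold_insert)
    also have "\<dots> = Dop S (basis_e c) (\<lambda>v. if v \<in> Wset B then 1 else 0)"
      using insert assms by (simp add: GAmul_tchi)
    also have "\<dots> = (\<lambda>v. if v \<in> Wset (insert c B) then 1 else 0)"
    proof
      fix v
      show "Dop S (basis_e c) (\<lambda>v. if v \<in> Wset B then 1 else 0) v =
            (if v \<in> Wset (insert c B) then 1 else 0)"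
      proof (cases "v \<in> Wset S")
        case False
        moreover have "Wset (insert c B) \<subseteq> Wset S" using insert by (auto simp: Wset_def)
        ultimately show ?thesis by (auto simp: Dop_def)
      next
        case True
        show ?thesis
        proof (cases "v c = 1")
          case True
          have "v \<notin> Wset B" using True insert by (auto simp: Wset_def)
          moreover have "(Wadd v (basis_e c) \<in> Wset B) = (v \<in> Wset (insert c B))"
            using True insert(2) by (auto simp: Wset_def Wadd_def basis_e_def)
          ultimately show ?thesis using \<open>v \<in> Wset S\<close> by (auto simp: Dop_def)
        next
          case False
          then have vc: "v c = 0" by simp
          have "Wadd v (basis_e c) \<notin> Wset B"
            using vc insert(2) by (auto simp: Wset_def Wadd_def basis_e_def)
          moreover have "(v \<in> Wset B) = (v \<in> Wset (insert c B))"
            using vc by (auto simp: Wset_def)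
          ultimately show ?thesis using \<open>v \<in> Wset S\<close> by (auto simp: Dop_def)
        qed
      qed
    qed
    finally show ?case .
  qed
qed


definition co :: "'c set \<Rightarrow> 'c grpalg \<Rightarrow> 'c set \<Rightarrow> bit" where
  "co S q B = (\<Sum>C\<in>{C\<in>Pow S. B \<subseteq> C}. q (ind C))"

definition lev :: "'c set \<Rightarrow> nat \<Rightarrow> 'c grpalg \<Rightarrow> bool" where
  "lev S j r \<longleftrightarrow> (\<forall>B\<subseteq>S. card B < j \<longrightarrow> co S r B = 0)"

fun perml :: "('c \<Rightarrow> bit) list \<Rightarrow> 'c set \<Rightarrow> bit" where
  "perml [] C = (if C = {} then 1 else 0)"
| "perml (u # us) C = (\<Sum>c\<in>C. u c * perml us (C - {c}))"

definition Dl :: "'c set \<Rightarrow> 'c vecW list \<Rightarrow> 'c grpalg \<Rightarrow> 'c grpalg" where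
  "Dl S us q = foldr (Dop S) us q"

lemma co_add: "co S (\<lambda>z. a z + b z) B = co S a B + co S b B"
  unfolding co_def by (simp add: sum.distrib)

lemma co_zero: "co S (\<lambda>z. 0) B = 0"
  unfolding co_def by simp

definition flip :: "'c \<Rightarrow> 'c set \<Rightarrow> 'c set" where
  "flip c C = (if c \<in> C then C - {c} else insert c C)"

lemma Wadd_ind_single: "Wadd (ind C) (ind {c}) = ind (flip c C)"
  unfolding Wadd_def ind_def flip_def by (auto simp: fun_eq_iff)

lemma flip_flip: "flip c (flip c C) = C"
  unfolding flip_def by auto

lemma F1:
  assumes "finite S" "c \<in> S" "D \<subseteq> S"
  shows "co S (Dop S (ind {c}) r) D = (if c \<in> D then co S r (D - {c}) else 0)"
proof -
  let ?P = "{C\<in>Pow S. D \<subseteq> C}"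
  have "co S (Dop S (ind {c}) r) D = (\<Sum>C\<in>?P. r (ind C) + r (ind (flip c C)))"
    unfolding co_def
    by (rule sum.cong) (auto simp: Dop_def ind_in_Wset Wadd_ind_single)
  also have "\<dots> = (\<Sum>C\<in>?P. r (ind C)) + (\<Sum>C\<in>?P. r (ind (flip c C)))"
    by (simp add: sum.distrib)
  also have "\<dots> = (if c \<in> D then co S r (D - {c}) else 0)"
  proof (cases "c \<in> D")
    case False
    have "(\<Sum>C\<in>?P. r (ind (flip c C))) = (\<Sum>C\<in>?P. r (ind C))"
      by (rule sum.reindex_bij_witness[where i="flip c" and j="flip c"])
         (use False assms in \<open>auto simp: flip_flip, auto simp: flip_def split: if_splits\<close>)
    then show ?thesis using False by simp
  next
    case True
    let ?Q = "{C\<in>Pow S. D - {c} \<subseteq> C \<and> c \<notin> C}"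
    have fin: "finite ?P" "finite ?Q" using assms(1) by auto
    have split: "{C\<in>Pow S. D - {c} \<subseteq> C} = ?P \<union> ?Q" using True by auto
    have disj: "?P \<inter> ?Q = {}" using True by auto
    have "(\<Sum>C\<in>?P. r (ind (flip c C))) = (\<Sum>C\<in>?Q. r (ind C))"
      by (rule sum.reindex_bij_witness[where i="insert c" and j="\<lambda>C. C - {c}"])
         (use True assms in \<open>auto simp: flip_def\<close>)
    moreover have "co S r (D - {c}) = (\<Sum>C\<in>?P. r (ind C)) + (\<Sum>C\<in>?Q. r (ind C))"
      unfolding co_def split by (rule sum.union_disjoint[OF fin disj])
    ultimately show ?thesis using True by simp
  qed
  finally show ?thesis .
qed

lemma F2:
  assumes "u \<in> Wset S" "u' \<in> Wset S"
  shows "Dop S (Wadd u u') r = (\<lambda>z. Dop S u r z + Dop S u' r z + Dop S u (Dop S u' r) z)"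
proof
  fix z
  show "Dop S (Wadd u u') r z = Dop S u r z + Dop S u' r z + Dop S u (Dop S u' r) z"
  proof (cases "z \<in> Wset S")
    case True
    then have a: "Wadd z u \<in> Wset S" using assms Wadd_in by auto
    have b: "Wadd (Wadd z u) u' = Wadd z (Wadd u u')" by (simp add: Wadd_assoc)
    have "r z + r (Wadd z (Wadd u u')) =
          r z + r (Wadd z u) + (r z + r (Wadd z u')) +
          (r z + r (Wadd z u') + (r (Wadd z u) + r (Wadd z (Wadd u u'))))"
      by (cases "r z"; cases "r (Wadd z u)"; cases "r (Wadd z u')"; cases "r (Wadd z (Wadd u u'))")
         simp_all
    then show ?thesis using True a b by (simp add: Dop_def)
  qed (simp add: Dop_def)
qed

lemma ind_insert: "c \<notin> X \<Longrightarrow> ind (insert c X) = Wadd (ind X) (ind {c})"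
  unfolding ind_def Wadd_def by (auto simp: fun_eq_iff)

lemma G:
  assumes "finite S" "X \<subseteq> S"
  shows "lev S j r \<Longrightarrow> lev S (Suc j) (Dop S (ind X) r) \<and>
     (\<forall>D\<subseteq>S. card D = Suc j \<longrightarrow> co S (Dop S (ind X) r) D = (\<Sum>c\<in>D. ind X c * co S r (D - {c})))"
proof -
  have "finite X" using assms finite_subset by blast
  from this assms(2) show "lev S j r \<Longrightarrow> ?thesis"
  proof (induction X arbitrary: j r rule: finite_induct)
    case empty
    have "Dop S (ind {}) r = (\<lambda>z. 0)" by (auto simp: Dop_def ind_def fun_eq_iff)
    then show ?case by (simp add: lev_def co_zero ind_def)
  next
    case (insert c X)
    have c: "c \<in> S" "X \<subseteq> S" using insert by auto
    have W: "ind X \<in> Wset S" "ind {c} \<in> Wset S" using c by (auto intro: ind_in_Wset)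
    let ?r1 = "Dop S (ind X) r" and ?r2 = "Dop S (ind {c}) r"
    let ?r3 = "Dop S (ind X) ?r2"
    have eq: "Dop S (ind (insert c X)) r = (\<lambda>z. ?r1 z + ?r2 z + ?r3 z)"
      using ind_insert[OF insert(2)] F2[OF W] by simp
    have co_eq: "co S (Dop S (ind (insert c X)) r) D = co S ?r1 D + co S ?r2 D + co S ?r3 D" for D
      unfolding eq by (simp add: co_add)
    have levr: "lev S j r" using insert.prems by blast
    note IH1 = insert.IH[OF levr c(2)]
    have lev2: "lev S (Suc j) ?r2"
      unfolding lev_def
    proof (intro allI impI)
      fix B assume B: "B \<subseteq> S" "card B < Suc j"
      show "co S ?r2 B = 0"
      proof (cases "c \<in> B")
        case True
        have "finite B" using B assms finite_subset by blast
        moreover have "card B > 0" using True \<open>finite B\<close> card_gt_0_iff by blast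
        ultimately have "card (B - {c}) < j" using True B by (simp add: card_Diff_singleton)
        then have "co S r (B - {c}) = 0" using levr B unfolding lev_def by blast
        then show ?thesis using True B by (simp add: F1 assms c)
      qed (use B in \<open>simp add: F1 assms c\<close>)
    qed
    note IH3 = insert.IH[OF lev2 c(2)]
    have lev3: "lev S (Suc j) ?r3" using IH3 unfolding lev_def by auto
    have "lev S (Suc j) (Dop S (ind (insert c X)) r)"
      using IH1 lev2 lev3 unfolding lev_def co_eq by simp
    moreover have "co S (Dop S (ind (insert c X)) r) D =
        (\<Sum>c'\<in>D. ind (insert c X) c' * co S r (D - {c'}))" if D: "D \<subseteq> S" "card D = Suc j" for D
    proof -
      have fD: "finite D" using D assms finite_subset by blast
      have "co S ?r3 D = 0" using IH3 D unfolding lev_def by simp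
      moreover have "co S ?r2 D = (\<Sum>c'\<in>D. ind {c} c' * co S r (D - {c'}))"
      proof -
        have "(\<Sum>c'\<in>D. ind {c} c' * co S r (D - {c'})) = (\<Sum>c'\<in>D. if c' = c then co S r (D - {c'}) else 0)"
          by (rule sum.cong) (auto simp: ind_def)
        also have "\<dots> = (if c \<in> D then co S r (D - {c}) else 0)" using fD by (simp add: sum.delta')
        finally show ?thesis using F1[OF assms(1) c(1) D(1)] by simp
      qed
      moreover have "co S ?r1 D = (\<Sum>c'\<in>D. ind X c' * co S r (D - {c'}))" using IH1 D by simp
      moreover have "ind (insert c X) c' = ind X c' + ind {c} c'" for c'
        using insert(2) by (auto simp: ind_def)
      ultimately show ?thesis unfolding co_eq by (simp add: distrib_right sum.distrib)
    qed
    ultimately show ?case by blast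
  qed
qed

lemma H:
  assumes "finite S" "\<forall>u\<in>set us. \<exists>X\<subseteq>S. u = ind X"
  shows "lev S (length us) (Dl S us q) \<and>
    (\<forall>D\<subseteq>S. card D = length us \<longrightarrow> co S (Dl S us q) D = co S q {} * perml us D)"
  using assms(2)
proof (induction us)
  case Nil
  have "D \<subseteq> S \<Longrightarrow> card D = 0 \<Longrightarrow> D = {}" for D using assms(1) by (metis card_0_eq finite_subset)
  then show ?case by (auto simp: lev_def Dl_def)
next
  case (Cons u us)
  obtain X where X: "X \<subseteq> S" "u = ind X" using Cons.prems by auto
  have IH: "lev S (length us) (Dl S us q)"
    "\<And>D. D \<subseteq> S \<Longrightarrow> card D = length us \<Longrightarrow> co S (Dl S us q) D = co S q {} * perml us D"
    using Cons by auto
  have DlC: "Dl S (u # us) q = Dop S (ind X) (Dl S us q)" using X by (simp add: Dl_def)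
  note g = G[OF assms(1) X(1) IH(1)]
  have g2: "\<And>D. D \<subseteq> S \<Longrightarrow> card D = Suc (length us) \<Longrightarrow>
    co S (Dop S (ind X) (Dl S us q)) D = (\<Sum>c\<in>D. ind X c * co S (Dl S us q) (D - {c}))"
    using g by blast
  have "co S (Dl S (u # us) q) D = co S q {} * perml (u # us) D"
    if D: "D \<subseteq> S" "card D = length (u # us)" for D
  proof -
    have fD: "finite D" using D assms finite_subset by blast
    have "co S (Dl S (u # us) q) D = (\<Sum>c\<in>D. ind X c * co S (Dl S us q) (D - {c}))"
      unfolding DlC using D by (intro g2) auto
    also have "\<dots> = (\<Sum>c\<in>D. ind X c * (co S q {} * perml us (D - {c})))"
      by (rule sum.cong) (use D fD in \<open>auto intro!: IH(2)\<close>)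
    also have "\<dots> = co S q {} * perml (u # us) D"
      unfolding perml.simps sum_distrib_left X(2) by (rule sum.cong) (simp_all add: mult.left_commute)
    finally show ?thesis .
  qed
  moreover have "lev S (length (u # us)) (Dl S (u # us) q)" using g DlC by simp
  ultimately show ?case by blast
qed


lemma card_interval:
  assumes "finite C" "X \<subseteq> C"
  shows "card {B. X \<subseteq> B \<and> B \<subseteq> C} = 2 ^ card (C - X)"
proof -
  have "bij_betw (\<lambda>B. B - X) {B. X \<subseteq> B \<and> B \<subseteq> C} (Pow (C - X))"
    by (rule bij_betw_byWitness[where f'="\<lambda>B. B \<union> X"]) (use assms in auto)
  then have "card {B. X \<subseteq> B \<and> B \<subseteq> C} = card (Pow (C - X))" by (rule bij_betw_same_card)
  also have "\<dots> = 2 ^ card (C - X)" using assms by (simp add: card_Pow)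
  finally show ?thesis .
qed

lemma mobius:
  assumes "finite S" "X \<subseteq> S"
  shows "(\<Sum>B\<in>{B\<in>Pow S. X \<subseteq> B}. \<Sum>C\<in>{C\<in>Pow S. B \<subseteq> C}. f C) = (f X :: bit)"
proof -
  have fin: "finite (Pow S)" using assms by simp
  have "(\<Sum>B\<in>{B\<in>Pow S. X \<subseteq> B}. \<Sum>C\<in>{C\<in>Pow S. B \<subseteq> C}. f C) =
        (\<Sum>B\<in>Pow S. \<Sum>C\<in>Pow S. if X \<subseteq> B \<and> B \<subseteq> C then f C else 0)"
  proof -
    have "(\<Sum>B\<in>{B\<in>Pow S. X \<subseteq> B}. \<Sum>C\<in>{C\<in>Pow S. B \<subseteq> C}. f C) =
          (\<Sum>B\<in>Pow S. if X \<subseteq> B then (\<Sum>C\<in>{C\<in>Pow S. B \<subseteq> C}. f C) else 0)"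
      by (rule sum.inter_filter[OF fin])
    also have "\<dots> = (\<Sum>B\<in>Pow S. \<Sum>C\<in>Pow S. if X \<subseteq> B \<and> B \<subseteq> C then f C else 0)"
    proof (rule sum.cong[OF refl])
      fix B
      show "(if X \<subseteq> B then (\<Sum>C\<in>{C\<in>Pow S. B \<subseteq> C}. f C) else 0) =
            (\<Sum>C\<in>Pow S. if X \<subseteq> B \<and> B \<subseteq> C then f C else 0)"
      proof (cases "X \<subseteq> B")
        case True
        then show ?thesis using sum.inter_filter[OF fin, of f "\<lambda>C. B \<subseteq> C"] by simp
      qed simp
    qed
    finally show ?thesis .
  qed
  also have "\<dots> = (\<Sum>C\<in>Pow S. \<Sum>B\<in>Pow S. if X \<subseteq> B \<and> B \<subseteq> C then f C else 0)"
    by (rule sum.swap)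
  also have "\<dots> = (\<Sum>C\<in>Pow S. if C = X then f C else 0)"
  proof (rule sum.cong)
    fix C assume C: "C \<in> Pow S"
    have "(\<Sum>B\<in>Pow S. if X \<subseteq> B \<and> B \<subseteq> C then f C else 0) = (\<Sum>B\<in>{B\<in>Pow S. X \<subseteq> B \<and> B \<subseteq> C}. f C)"
      by (rule sum.inter_filter[OF fin, symmetric])
    also have "\<dots> = of_nat (card {B\<in>Pow S. X \<subseteq> B \<and> B \<subseteq> C}) * f C" by simp
    also have "\<dots> = (if C = X then f C else 0)"
    proof (cases "X \<subseteq> C")
      case True
      have fC: "finite C" using C assms finite_subset by auto
      have "{B\<in>Pow S. X \<subseteq> B \<and> B \<subseteq> C} = {B. X \<subseteq> B \<and> B \<subseteq> C}" using C by auto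
      then have "card {B\<in>Pow S. X \<subseteq> B \<and> B \<subseteq> C} = 2 ^ card (C - X)"
        using card_interval[OF fC True] by simp
      moreover have "card (C - X) = 0 \<longleftrightarrow> C = X"
      proof -
        have "finite (C - X)" using fC by simp
        then have "card (C - X) = 0 \<longleftrightarrow> C - X = {}" by simp
        also have "\<dots> \<longleftrightarrow> C = X" using True by blast
        finally show ?thesis .
      qed
      ultimately show ?thesis by simp
    next
      case False
      then have E: "{B\<in>Pow S. X \<subseteq> B \<and> B \<subseteq> C} = {}" by blast
      have "C \<noteq> X" using False by blast
      moreover have "card {B\<in>Pow S. X \<subseteq> B \<and> B \<subseteq> C} = 0" by (simp only: E card.empty)
      ultimately show ?thesis by simp
    qed
    finally show "(\<Sum>B\<in>Pow S. if X \<subseteq> B \<and> B \<subseteq> C then f C else 0) = (if C = X then f C else 0)" .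
  qed simp
  also have "\<dots> = f X" using fin assms by (simp add: sum.delta')
  finally show ?thesis .
qed

lemma ind_in_Wset_iff: "(ind X \<in> Wset B) = (X \<subseteq> B)"
  unfolding ind_def Wset_def by auto

lemma coeff_t_co:
  assumes "finite S" "p \<in> GA S" "B \<subseteq> S"
  shows "coeff_t S p B = co S p B"
proof -
  define P where "P = (\<lambda>c. (\<forall>B'. \<not> B' \<subseteq> S \<longrightarrow> c B' = (0::bit))
                          \<and> p = (\<lambda>v. \<Sum>B'\<in>Pow S. c B' * t_B S B' v))"
  define c0 where "c0 = (\<lambda>B. if B \<subseteq> S then co S p B else 0)"
  have tt: "B' \<in> Pow S \<Longrightarrow> t_B S B' v = (if v \<in> Wset B' then 1 else 0)" for B' v
    using tt_ind[OF assms(1)] by simp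
  have sumt: "(\<Sum>B'\<in>Pow S. c B' * t_B S B' (ind X)) = (\<Sum>B'\<in>{B'\<in>Pow S. X \<subseteq> B'}. c B')" for c X
  proof -
    have "(\<Sum>B'\<in>Pow S. c B' * t_B S B' (ind X)) = (\<Sum>B'\<in>Pow S. if X \<subseteq> B' then c B' else 0)"
      by (rule sum.cong) (auto simp: tt ind_in_Wset_iff)
    also have "\<dots> = (\<Sum>B'\<in>{B'\<in>Pow S. X \<subseteq> B'}. c B')"
      using assms(1) by (intro sum.inter_filter[symmetric]) simp
    finally show ?thesis .
  qed
  have Pc0: "P c0"
    unfolding P_def
  proof (intro conjI allI impI)
    show "c0 B' = 0" if "\<not> B' \<subseteq> S" for B' using that by (simp add: c0_def)
    show "p = (\<lambda>v. \<Sum>B'\<in>Pow S. c0 B' * t_B S B' v)"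
    proof
      fix v
      show "p v = (\<Sum>B'\<in>Pow S. c0 B' * t_B S B' v)"
      proof (cases "v \<in> Wset S")
        case False
        then have "p v = 0" using assms(2) by (simp add: GA_def)
        moreover have "t_B S B' v = 0" if "B' \<in> Pow S" for B'
          using that False by (auto simp: tt Wset_def)
        ultimately show ?thesis by simp
      next
        case True
        define X where "X = {c\<in>S. v c = 1}"
        have v: "v = ind X" and X: "X \<subseteq> S" using Wset_eq_ind[OF True] by (auto simp: X_def)
        have "(\<Sum>B'\<in>Pow S. c0 B' * t_B S B' v) = (\<Sum>B'\<in>{B'\<in>Pow S. X \<subseteq> B'}. c0 B')"
          unfolding v by (rule sumt)
        also have "\<dots> = (\<Sum>B'\<in>{B'\<in>Pow S. X \<subseteq> B'}. \<Sum>C\<in>{C\<in>Pow S. B' \<subseteq> C}. p (ind C))"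
          by (rule sum.cong) (auto simp: c0_def co_def)
        also have "\<dots> = p v" unfolding v by (rule mobius[OF assms(1) X])
        finally show ?thesis by simp
      qed
    qed
  qed
  have uniq: "c = c0" if "P c" for c
  proof
    fix D
    show "c D = c0 D"
    proof (cases "D \<subseteq> S")
      case False
      then show ?thesis using that by (simp add: P_def c0_def)
    next
      case True
      have peq: "p = (\<lambda>v. \<Sum>B'\<in>Pow S. c B' * t_B S B' v)" using that by (simp add: P_def)
      have "co S p D = (\<Sum>C\<in>{C\<in>Pow S. D \<subseteq> C}. \<Sum>B'\<in>{B'\<in>Pow S. C \<subseteq> B'}. c B')"
        unfolding co_def by (rule sum.cong) (simp, subst peq, rule sumt)
      also have "\<dots> = c D" by (rule mobius[OF assms(1) True])
      finally show ?thesis using True by (simp add: c0_def)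
    qed
  qed
  have "(THE c. P c) = c0" using Pc0 uniq by (rule the_equality)
  then show ?thesis unfolding coeff_t_def P_def[symmetric] using assms(3) by (simp add: c0_def)
qed


lemma semidir_mult:
  "(p, w) \<otimes>\<^bsub>semidir S\<^esub> (q, v) = (GAadd p (GAmul S (delta w) q), Wadd w v)"
  by (simp add: semidir_def)

lemma semidir_mult':
  assumes "finite S" "w \<in> Wset S"
  shows "(p, w) \<otimes>\<^bsub>semidir S\<^esub> (q, v) = ((\<lambda>z. p z + sh S w q z), Wadd w v)"
  using assms by (simp add: semidir_mult GAmul_delta GAadd_def)

lemma sh_zero: "p \<in> GA S \<Longrightarrow> sh S (\<lambda>_. 0) p = p"
  unfolding sh_def GA_def by (auto simp: fun_eq_iff)

lemma sh_sh: "a \<in> Wset S \<Longrightarrow> sh S a (sh S b p) = sh S (Wadd a b) p"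
  unfolding sh_def by (auto simp: fun_eq_iff Wadd_in Wadd_assoc)

lemma sh_GA: "sh S a p \<in> GA S"
  unfolding sh_def GA_def by auto

lemma bit_eq_from_sum: "(a::bit) + b = 0 \<Longrightarrow> b = a"
  by (cases a; cases b) simp_all

lemma bit_aba: "(x::bit) + y + x = y" by (cases x; cases y) simp_all

lemma Wadd_aba: "Wadd (Wadd a b) a = b"
  unfolding Wadd_def by (simp add: bit_aba)

lemma carrier_semidir: "carrier (semidir S) = GA S \<times> Wset S"
  by (simp add: semidir_def)

lemma nc_cons_gen: "xs \<noteq> [] \<Longrightarrow> nested_comm G (x # xs) = commutator G x (nested_comm G xs)"
  by (cases xs) auto

lemma nested_carrier_gen:
  assumes "group G"
  shows "(\<forall>x\<in>set xs. x \<in> carrier G) \<Longrightarrow> nested_comm G xs \<in> carrier G"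
proof (induction xs)
  case Nil
  then show ?case using assms by (simp add: group.is_monoid monoid.one_closed)
next
  case (Cons x xs)
  show ?case
  proof (cases "xs = []")
    case True
    then show ?thesis using Cons.prems by simp
  next
    case False
    have "nested_comm G xs \<in> carrier G" using Cons by simp
    moreover have "x \<in> carrier G" using Cons.prems by simp
    moreover have m: "\<And>a b. a \<in> carrier G \<Longrightarrow> b \<in> carrier G \<Longrightarrow> a \<otimes>\<^bsub>G\<^esub> b \<in> carrier G"
      using monoid.m_closed[OF group.is_monoid[OF assms]] by blast
    ultimately show ?thesis unfolding nc_cons_gen[OF False] commutator_def
      by (intro m group.inv_closed[OF assms])
  qed
qed

locale cm_ctx =
  fixes G :: "('g, 'b) monoid_scheme" and S :: "'c set" and \<psi> :: "'g \<Rightarrow> 'c grpalg \<times> 'c vecW"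
  assumes grp: "group G" and hom: "\<psi> \<in> hom G (semidir S)" and finS: "finite S"
begin

lemma psi_carrier: "x \<in> carrier G \<Longrightarrow> fst (\<psi> x) \<in> GA S \<and> snd (\<psi> x) \<in> Wset S"
  using hom_in_carrier[OF hom] by (auto simp: carrier_semidir mem_Times_iff)

lemma psi_mult:
  assumes "x \<in> carrier G" "y \<in> carrier G"
  shows "\<psi> (x \<otimes>\<^bsub>G\<^esub> y) = ((\<lambda>z. fst (\<psi> x) z + sh S (snd (\<psi> x)) (fst (\<psi> y)) z), Wadd (snd (\<psi> x)) (snd (\<psi> y)))"
proof -
  have "\<psi> (x \<otimes>\<^bsub>G\<^esub> y) = (fst (\<psi> x), snd (\<psi> x)) \<otimes>\<^bsub>semidir S\<^esub> (fst (\<psi> y), snd (\<psi> y))"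
    using hom_mult[OF hom assms] by simp
  also have "\<dots> = ((\<lambda>z. fst (\<psi> x) z + sh S (snd (\<psi> x)) (fst (\<psi> y)) z), Wadd (snd (\<psi> x)) (snd (\<psi> y)))"
    by (rule semidir_mult'[OF finS]) (use psi_carrier assms in auto)
  finally show ?thesis .
qed

lemma psi_one: "\<psi> \<one>\<^bsub>G\<^esub> = (\<lambda>_. 0, \<lambda>_. 0)"
proof -
  have one: "\<one>\<^bsub>G\<^esub> \<in> carrier G" using grp by (simp add: group.is_monoid monoid.one_closed)
  have oo: "\<one>\<^bsub>G\<^esub> \<otimes>\<^bsub>G\<^esub> \<one>\<^bsub>G\<^esub> = \<one>\<^bsub>G\<^esub>" using grp one by (simp add: group.is_monoid monoid.l_one)
  obtain p w where pw: "\<psi> \<one>\<^bsub>G\<^esub> = (p, w)" by fastforce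
  have pG: "p \<in> GA S" and wW: "w \<in> Wset S" using psi_carrier[OF one] pw by auto
  have "\<psi> \<one>\<^bsub>G\<^esub> = ((\<lambda>z. p z + sh S w p z), Wadd w w)"
    using psi_mult[OF one one] oo pw by simp
  then have w: "w = Wadd w w" and p: "p = (\<lambda>z. p z + sh S w p z)" using pw by auto
  have w0: "w = (\<lambda>_. 0)" using w by (simp add: Wadd_self)
  have "p = (\<lambda>z. p z + p z)" using p unfolding w0 sh_zero[OF pG] .
  then have "p = (\<lambda>_. 0)" by simp
  then show ?thesis using pw w0 by simp
qed

lemma psi_inv:
  assumes "x \<in> carrier G"
  shows "\<psi> (inv\<^bsub>G\<^esub> x) = (sh S (snd (\<psi> x)) (fst (\<psi> x)), snd (\<psi> x))"
proof -
  have ix: "inv\<^bsub>G\<^esub> x \<in> carrier G" using grp assms by (simp add: group.inv_closed)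
  have r: "x \<otimes>\<^bsub>G\<^esub> inv\<^bsub>G\<^esub> x = \<one>\<^bsub>G\<^esub>" using grp assms by (simp add: group.r_inv)
  obtain p w where pw: "\<psi> x = (p, w)" by fastforce
  obtain p' w' where pw': "\<psi> (inv\<^bsub>G\<^esub> x) = (p', w')" by fastforce
  have pG: "p' \<in> GA S" and wW: "w \<in> Wset S" using psi_carrier assms ix pw pw' by (metis fst_conv, metis snd_conv)
  have "(\<lambda>_. 0, \<lambda>_. 0) = ((\<lambda>z. p z + sh S w p' z), Wadd w w')"
    using psi_mult[OF assms ix] r psi_one pw pw' by simp
  then have e1: "\<And>z. p z + sh S w p' z = 0" and e2: "\<And>c. w c + w' c = 0"
    by (auto simp: fun_eq_iff Wadd_def)
  have w'w: "w' = w" using e2 bit_eq_from_sum by (auto simp: fun_eq_iff)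
  have "sh S w p' = p" using e1 bit_eq_from_sum by (auto simp: fun_eq_iff)
  then have "sh S w p = sh S (Wadd w w) p'" using sh_sh[OF wW] by metis
  also have "\<dots> = p'" by (simp add: Wadd_self sh_zero[OF pG])
  finally show ?thesis using pw pw' w'w by simp
qed

lemma psi_comm:
  assumes "x \<in> carrier G" "y \<in> carrier G"
  shows "\<psi> (commutator G x y) =
    ((\<lambda>z. Dop S (snd (\<psi> y)) (fst (\<psi> x)) z + Dop S (snd (\<psi> x)) (fst (\<psi> y)) z), (\<lambda>_. 0))"
proof -
  obtain p w where pw: "\<psi> x = (p, w)" by fastforce
  obtain q v where qv: "\<psi> y = (q, v)" by fastforce
  have pG: "p \<in> GA S" and wW: "w \<in> Wset S" using psi_carrier[OF assms(1)] pw by auto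
  have qG: "q \<in> GA S" and vW: "v \<in> Wset S" using psi_carrier[OF assms(2)] qv by auto
  have ix: "inv\<^bsub>G\<^esub> x \<in> carrier G" and iy: "inv\<^bsub>G\<^esub> y \<in> carrier G"
    using grp assms by (auto simp: group.inv_closed)
  have mc: "\<And>a b. a \<in> carrier G \<Longrightarrow> b \<in> carrier G \<Longrightarrow> a \<otimes>\<^bsub>G\<^esub> b \<in> carrier G"
    using grp by (simp add: group.is_monoid monoid.m_closed)
  have xy: "x \<otimes>\<^bsub>G\<^esub> y \<in> carrier G" using mc assms by blast
  have xyx: "x \<otimes>\<^bsub>G\<^esub> y \<otimes>\<^bsub>G\<^esub> inv\<^bsub>G\<^esub> x \<in> carrier G" using mc xy ix by blast
  have s1: "\<psi> (x \<otimes>\<^bsub>G\<^esub> y) = ((\<lambda>z. p z + sh S w q z), Wadd w v)"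
    using psi_mult[OF assms] pw qv by simp
  have s2: "\<psi> (x \<otimes>\<^bsub>G\<^esub> y \<otimes>\<^bsub>G\<^esub> inv\<^bsub>G\<^esub> x) =
     ((\<lambda>z. p z + sh S w q z + sh S (Wadd w v) (sh S w p) z), Wadd (Wadd w v) w)"
    using psi_mult[OF xy ix] s1 psi_inv[OF assms(1)] pw by simp
  have s3: "\<psi> (commutator G x y) =
     ((\<lambda>z. p z + sh S w q z + sh S (Wadd w v) (sh S w p) z + sh S (Wadd (Wadd w v) w) (sh S v q) z),
      Wadd (Wadd (Wadd w v) w) v)"
    unfolding commutator_def using psi_mult[OF xyx iy] s2 psi_inv[OF assms(2)] qv by simp
  have wv: "Wadd w v \<in> Wset S" using wW vW Wadd_in by blast
  have a2: "Wadd (Wadd w v) w = v" by (rule Wadd_aba)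
  have a1: "Wadd (Wadd (Wadd w v) w) v = (\<lambda>_. 0)" unfolding a2 by (rule Wadd_self)
  have b1: "sh S (Wadd w v) (sh S w p) = sh S v p" using sh_sh[OF wv] a2 by simp
  have b2: "sh S v (sh S v q) = sh S (\<lambda>_. 0) q" using sh_sh[OF vW] by (simp add: Wadd_self)
  have "(\<lambda>z. p z + sh S w q z + sh S (Wadd w v) (sh S w p) z + sh S (Wadd (Wadd w v) w) (sh S v q) z)
        = (\<lambda>z. Dop S v p z + Dop S w q z)"
  proof
    fix z
    show "p z + sh S w q z + sh S (Wadd w v) (sh S w p) z + sh S (Wadd (Wadd w v) w) (sh S v q) z
        = Dop S v p z + Dop S w q z"
    proof (cases "z \<in> Wset S")
      case True
      have e: "sh S w q z = q (Wadd z w)" "sh S v p z = p (Wadd z v)" using True by (simp_all add: sh_def)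
      have d: "Dop S v p z = p z + p (Wadd z v)" "Dop S w q z = q z + q (Wadd z w)"
        using True by (simp_all add: Dop_def)
      show ?thesis unfolding a2 b1 b2 sh_zero[OF qG] e d by (simp only: add_ac)
    next
      case False
      have e: "sh S w q z = 0" "sh S v p z = 0" "p z = 0" "q z = 0"
        using False pG qG by (simp_all add: sh_def GA_def)
      have d: "Dop S v p z = 0" "Dop S w q z = 0" using False by (simp_all add: Dop_def)
      show ?thesis unfolding a2 b1 b2 sh_zero[OF qG] e d by simp
    qed
  qed
  then have "\<psi> (commutator G x y) = ((\<lambda>z. Dop S v p z + Dop S w q z), (\<lambda>_. 0))"
    unfolding s3 a1 by (simp only:)
  then show ?thesis using pw qv by simp
qed


lemma mc: "a \<in> carrier G \<Longrightarrow> b \<in> carrier G \<Longrightarrow> a \<otimes>\<^bsub>G\<^esub> b \<in> carrier G"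
  using grp by (simp add: group.is_monoid monoid.m_closed)

lemma comm_carrier: "a \<in> carrier G \<Longrightarrow> b \<in> carrier G \<Longrightarrow> commutator G a b \<in> carrier G"
  unfolding commutator_def by (intro mc group.inv_closed[OF grp])

lemma nc_cons: "xs \<noteq> [] \<Longrightarrow> nested_comm G (x # xs) = commutator G x (nested_comm G xs)"
  by (cases xs) auto

lemma Dop_zero: "Dop S (\<lambda>_. 0) p = (\<lambda>z. 0)"
  by (auto simp: Dop_def fun_eq_iff)

lemma psi_nested:
  assumes "\<forall>x\<in>set ys. x \<in> carrier G" "a \<in> carrier G" "b \<in> carrier G"
  shows "\<psi> (nested_comm G (ys @ [a, b])) =
    (Dl S (map (\<lambda>x. snd (\<psi> x)) ys) (\<lambda>z. Dop S (snd (\<psi> b)) (fst (\<psi> a)) z + Dop S (snd (\<psi> a)) (fst (\<psi> b)) z),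
     (\<lambda>_. 0))"
  using assms(1)
proof (induction ys)
  case Nil
  have "nested_comm G ([] @ [a, b]) = commutator G a b" by simp
  then show ?case using psi_comm[OF assms(2,3)] by (simp add: Dl_def)
next
  case (Cons y ys)
  let ?R = "Dl S (map (\<lambda>x. snd (\<psi> x)) ys) (\<lambda>z. Dop S (snd (\<psi> b)) (fst (\<psi> a)) z + Dop S (snd (\<psi> a)) (fst (\<psi> b)) z)"
  have y: "y \<in> carrier G" and ys: "\<forall>x\<in>set ys. x \<in> carrier G" using Cons.prems by auto
  have IH: "\<psi> (nested_comm G (ys @ [a, b])) = (?R, (\<lambda>_. 0))" using Cons.IH ys by blast
  have r: "nested_comm G (ys @ [a, b]) \<in> carrier G"
    using nested_carrier_gen[OF grp] ys assms(2,3) by auto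
  have "nested_comm G ((y # ys) @ [a, b]) = commutator G y (nested_comm G (ys @ [a, b]))"
    using nc_cons[of "ys @ [a, b]" y] by simp
  then have "\<psi> (nested_comm G ((y # ys) @ [a, b])) =
     ((\<lambda>z. Dop S (\<lambda>_. 0) (fst (\<psi> y)) z + Dop S (snd (\<psi> y)) ?R z), (\<lambda>_. 0))"
    using psi_comm[OF y r] IH by simp
  also have "\<dots> = (Dop S (snd (\<psi> y)) ?R, (\<lambda>_. 0))" by (simp add: Dop_zero)
  finally show ?case by (simp add: Dl_def)
qed

end



definition Bij :: "'a set \<Rightarrow> 'b set \<Rightarrow> ('a \<Rightarrow> 'b) set" where
  "Bij I C = {f \<in> I \<rightarrow>\<^sub>E C. bij_betw f I C}"

lemma finite_Bij: "finite I \<Longrightarrow> finite C \<Longrightarrow> finite (Bij I C)"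
  unfolding Bij_def by (rule finite_subset[OF _ finite_PiE]) auto

lemma Bij_inj:
  assumes "i \<notin> I"
  shows "inj_on (\<lambda>g. g(i := c)) (Bij I D)"
proof
  fix g g' assume g: "g \<in> Bij I D" and g': "g' \<in> Bij I D" and eq: "g(i := c) = g'(i := c)"
  have "g i = undefined" "g' i = undefined" using g g' assms by (auto simp: Bij_def PiE_def extensional_def)
  then show "g = g'" using eq by (metis fun_upd_idem fun_upd_upd)
qed

lemma Bij_split:
  assumes "i \<notin> I" "c \<in> C"
  shows "{f \<in> Bij (insert i I) C. f i = c} = (\<lambda>g. g(i := c)) ` Bij I (C - {c})"
proof
  show "{f \<in> Bij (insert i I) C. f i = c} \<subseteq> (\<lambda>g. g(i := c)) ` Bij I (C - {c})"
  proof
    fix f assume "f \<in> {f \<in> Bij (insert i I) C. f i = c}"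
    then have fP: "f \<in> insert i I \<rightarrow>\<^sub>E C" and fb: "bij_betw f (insert i I) C" and fi: "f i = c"
      by (auto simp: Bij_def)
    define g where "g = f(i := undefined)"
    have fg: "f = g(i := c)" using fi by (auto simp: g_def)
    have inj: "inj_on f (insert i I)" by (rule bij_betw_imp_inj_on[OF fb])
    have img: "f ` insert i I = C" by (rule bij_betw_imp_surj_on[OF fb])
    have fI: "f ` I = C - {c}"
    proof -
      have ni: "f i \<notin> f ` I" using inj assms(1) by (simp add: inj_on_insert)
      have "insert c (f ` I) = C" using img fi by simp
      then show ?thesis using ni fi by blast
    qed
    have gI: "\<And>j. j \<in> I \<Longrightarrow> g j = f j" using assms(1) unfolding g_def by (metis fun_upd_other)
    have "g \<in> I \<rightarrow>\<^sub>E C - {c}"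
    proof (rule PiE_I)
      fix j assume j: "j \<in> I"
      then have "f j \<in> f ` I" by blast
      then show "g j \<in> C - {c}" using gI[OF j] fI by simp
    next
      fix j assume "j \<notin> I"
      show "g j = undefined"
      proof (cases "j = i")
        case True then show ?thesis by (simp add: g_def)
      next
        case False
        then have "j \<notin> insert i I" using \<open>j \<notin> I\<close> by simp
        then show ?thesis using PiE_arb[OF fP] False by (simp add: g_def)
      qed
    qed
    moreover have "bij_betw g I (C - {c})"
    proof -
      have "inj_on f I" using inj by (simp add: inj_on_insert)
      then have "inj_on g I" using gI inj_on_cong by blast
      moreover have "g ` I = f ` I" by (rule image_cong[OF refl gI])
      then have "g ` I = C - {c}" using fI by simp
      ultimately show ?thesis by (simp add: bij_betw_def)
    qed
    ultimately have "g \<in> Bij I (C - {c})" by (simp add: Bij_def)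
    then show "f \<in> (\<lambda>g. g(i := c)) ` Bij I (C - {c})" using fg by blast
  qed
next
  show "(\<lambda>g. g(i := c)) ` Bij I (C - {c}) \<subseteq> {f \<in> Bij (insert i I) C. f i = c}"
  proof
    fix f assume "f \<in> (\<lambda>g. g(i := c)) ` Bij I (C - {c})"
    then obtain g where g: "g \<in> Bij I (C - {c})" and fg: "f = g(i := c)" by blast
    have gP: "g \<in> I \<rightarrow>\<^sub>E C - {c}" and gb: "bij_betw g I (C - {c})" using g by (auto simp: Bij_def)
    have gI: "\<And>j. j \<in> I \<Longrightarrow> f j = g j" using assms(1) fg by auto
    have "f \<in> insert i I \<rightarrow>\<^sub>E C"
    proof (rule PiE_I)
      fix j assume j: "j \<in> insert i I"
      show "f j \<in> C"
      proof (cases "j = i")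
        case True then show ?thesis using fg assms(2) by simp
      next
        case False
        then have "j \<in> I" using j by simp
        then have "g j \<in> C - {c}" by (rule PiE_mem[OF gP])
        then show ?thesis using False fg by simp
      qed
    next
      fix j assume "j \<notin> insert i I"
      then have "j \<notin> I" "j \<noteq> i" by auto
      then show "f j = undefined" using PiE_arb[OF gP] fg by simp
    qed
    moreover have "bij_betw f (insert i I) C"
    proof -
      have ig: "inj_on g I" by (rule bij_betw_imp_inj_on[OF gb])
      have gimg: "g ` I = C - {c}" by (rule bij_betw_imp_surj_on[OF gb])
      have "inj_on f I" using ig gI inj_on_cong by blast
      moreover have "f ` I = g ` I" by (rule image_cong[OF refl gI])
      then have fimg: "f ` I = C - {c}" using gimg by simp
      moreover have "f i = c" using fg by simp
      ultimately have "inj_on f (insert i I)" using assms(1) by (simp add: inj_on_insert)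
      moreover have "f ` insert i I = C" using fimg \<open>f i = c\<close> assms(2) by (simp add: insert_absorb)
      ultimately show ?thesis by (simp add: bij_betw_def)
    qed
    ultimately show "f \<in> {f \<in> Bij (insert i I) C. f i = c}" using fg by (simp add: Bij_def)
  qed
qed

lemma Bij_empty: "Bij {} C = (if C = {} then {\<lambda>_. undefined} else {})"
  unfolding Bij_def by (auto simp: bij_betw_def)

lemma Bij_img: "f \<in> Bij I C \<Longrightarrow> j \<in> I \<Longrightarrow> f j \<in> C"
  unfolding Bij_def by auto

lemma perml_Bij:
  "distinct is \<Longrightarrow> finite C \<Longrightarrow>
   perml (map u is) C = (\<Sum>f\<in>Bij (set is) C. \<Prod>j\<in>set is. u j (f j))"
proof (induction "is" arbitrary: C)
  case Nil
  then show ?case by (simp add: Bij_empty)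
next
  case (Cons i "is")
  let ?I = "set is"
  have iI: "i \<notin> ?I" and dis: "distinct is" using Cons.prems by auto
  have fin: "finite (Bij (insert i ?I) C)" using Cons.prems by (simp add: finite_Bij)
  let ?F = "\<lambda>f. \<Prod>j\<in>insert i ?I. u j (f j)"
  have "(\<Sum>f\<in>Bij (insert i ?I) C. ?F f) = (\<Sum>c\<in>C. \<Sum>f\<in>{f \<in> Bij (insert i ?I) C. f i = c}. ?F f)"
    by (rule sum.group[symmetric, OF fin Cons.prems(2)]) (auto intro: Bij_img)
  also have "\<dots> = (\<Sum>c\<in>C. u i c * perml (map u is) (C - {c}))"
  proof (rule sum.cong[OF refl])
    fix c assume c: "c \<in> C"
    have "(\<Sum>f\<in>{f \<in> Bij (insert i ?I) C. f i = c}. ?F f) = (\<Sum>g\<in>Bij ?I (C - {c}). ?F (g(i := c)))"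
      unfolding Bij_split[OF iI c] by (rule sum.reindex[OF Bij_inj[OF iI], unfolded comp_def])
    also have "\<dots> = (\<Sum>g\<in>Bij ?I (C - {c}). u i c * (\<Prod>j\<in>?I. u j (g j)))"
    proof (rule sum.cong[OF refl])
      fix g
      have "?F (g(i := c)) = u i c * (\<Prod>j\<in>?I. u j ((g(i := c)) j))"
        using iI by (simp add: prod.insert)
      also have "(\<Prod>j\<in>?I. u j ((g(i := c)) j)) = (\<Prod>j\<in>?I. u j (g j))"
        by (rule prod.cong) (use iI in auto)
      finally show "?F (g(i := c)) = u i c * (\<Prod>j\<in>?I. u j (g j))" .
    qed
    also have "\<dots> = u i c * perml (map u is) (C - {c})"
      using Cons.IH[OF dis] Cons.prems by (simp add: sum_distrib_left)
    finally show "(\<Sum>f\<in>{f \<in> Bij (insert i ?I) C. f i = c}. ?F f) = u i c * perml (map u is) (C - {c})" .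
  qed
  finally show ?case by simp
qed


lemma Dop_add: "Dop S u (\<lambda>z. a z + b z) = (\<lambda>z. Dop S u a z + Dop S u b z)"
  by (auto simp: Dop_def fun_eq_iff add_ac)

lemma Dl_add: "Dl S us (\<lambda>z. a z + b z) = (\<lambda>z. Dl S us a z + Dl S us b z)"
  by (induction us) (simp_all add: Dl_def Dop_add)

lemma Dl_snoc: "Dl S us (Dop S u r) = Dl S (us @ [u]) r"
  by (simp add: Dl_def)

lemma augm_co:
  assumes "finite S"
  shows "augm S q = co S q {}"
proof -
  have "augm S q = (\<Sum>w\<in>ind ` Pow S. q w)" unfolding augm_def Wset_image ..
  also have "\<dots> = (\<Sum>C\<in>Pow S. q (ind C))"
    by (rule sum.reindex[unfolded comp_def]) (metis inj_onI ind_inj)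
  also have "\<dots> = co S q {}" unfolding co_def by (rule sum.cong) auto
  finally show ?thesis .
qed

theorem lemma3p22:
  fixes G :: "('g, 'b) monoid_scheme" and T :: "'g topology"
    and A :: "('g \<Rightarrow> bit) set" and chi0 :: "'g \<Rightarrow> bit"
    and \<psi> :: "'g \<Rightarrow> ('g \<Rightarrow> bit) grpalg \<times> ('g \<Rightarrow> bit) vecW"
    and \<sigma> :: "nat \<Rightarrow> 'g"
  assumes "profinite_group G T"
    and "expansion_map G T A chi0 \<psi>"
    and "\<forall>s \<in> {1..card A}. \<sigma> s \<in> carrier G"
  shows "phi (A - {chi0}) (A - {chi0}) \<psi> (nested_comm G (map \<sigma> [1..<card A + 1])) =
    (\<Sum>f \<in> {f \<in> {1..card A} \<rightarrow>\<^sub>E A. bij_betw f {1..card A} A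
                 \<and> (f (card A - 1) = chi0 \<or> f (card A) = chi0)}.
        \<Prod>s\<in>{1..card A}. f s (\<sigma> s))"
proof -
  define S where "S = A - {chi0}"
  define n where "n = card A"
  have grp: "group G" using assms(1) by (simp add: profinite_group_def)
  have finA: "finite A" and n2: "2 \<le> n" and c0A: "chi0 \<in> A"
    and hom: "\<psi> \<in> hom G (semidir S)"
    and sndpsi: "\<And>chi s. chi \<in> S \<Longrightarrow> s \<in> carrier G \<Longrightarrow> snd (\<psi> s) chi = chi s"
    and aug: "\<And>s. s \<in> carrier G \<Longrightarrow> augm S (fst (\<psi> s)) = chi0 s"
    using assms(2) unfolding expansion_map_def S_def n_def by auto
  have finS: "finite S" using finA by (simp add: S_def)
  have cardS: "card S = n - 1" using finA c0A by (simp add: S_def n_def)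
  interpret cm_ctx G S \<psi> using grp hom finS by (simp add: cm_ctx_def)
  have sig: "\<And>s. s \<in> {1..n} \<Longrightarrow> \<sigma> s \<in> carrier G" using assms(3) by (simp add: n_def)
  define wof where "wof = (\<lambda>s. snd (\<psi> (\<sigma> s)))"
  define pof where "pof = (\<lambda>s. fst (\<psi> (\<sigma> s)))"
  define F where "F = (\<lambda>f. \<Prod>s\<in>{1..n}. (f s (\<sigma> s) :: bit))"
  have key: "co S (Dl S (map wof is) (pof k)) S = (\<Sum>f\<in>{f \<in> Bij {1..n} A. f k = chi0}. F f)"
    if k: "k \<in> {1..n}" and dis: "distinct is" and setis: "set is = {1..n} - {k}" for k "is"
  proof -
    have kn: "k \<notin> set is" using setis by simp
    have ins: "{1..n} = insert k (set is)" unfolding setis by (rule insert_Diff[OF k, symmetric])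
    have len: "length is = card S" using distinct_card[OF dis] setis k cardS by simp
    have isn: "\<And>j. j \<in> set is \<Longrightarrow> j \<in> {1..n}" using setis by simp
    have ws: "\<forall>u\<in>set (map wof is). \<exists>X\<subseteq>S. u = ind X"
    proof
      fix u assume "u \<in> set (map wof is)"
      then obtain j where j: "j \<in> set is" "u = wof j" by auto
      have "u \<in> Wset S" using psi_carrier[OF sig[OF isn[OF j(1)]]] j by (simp add: wof_def)
      then show "\<exists>X\<subseteq>S. u = ind X" unfolding Wset_image by blast
    qed
    have "co S (Dl S (map wof is) (pof k)) S = co S (pof k) {} * perml (map wof is) S"
      using H[OF finS ws, of "pof k"] len by simp
    also have "co S (pof k) {} = chi0 (\<sigma> k)"
      using aug[OF sig[OF k]] augm_co[OF finS] by (simp add: pof_def)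
    also have "perml (map wof is) S = (\<Sum>g\<in>Bij (set is) S. \<Prod>j\<in>set is. wof j (g j))"
      by (rule perml_Bij[OF dis finS])
    also have "\<dots> = (\<Sum>g\<in>Bij (set is) S. \<Prod>j\<in>set is. g j (\<sigma> j))"
    proof (rule sum.cong[OF refl], rule prod.cong[OF refl])
      fix g j assume g: "g \<in> Bij (set is) S" and j: "j \<in> set is"
      show "wof j (g j) = g j (\<sigma> j)"
        unfolding wof_def by (rule sndpsi[OF Bij_img[OF g j] sig[OF isn[OF j]]])
    qed
    also have "chi0 (\<sigma> k) * (\<Sum>g\<in>Bij (set is) S. \<Prod>j\<in>set is. g j (\<sigma> j)) =
        (\<Sum>g\<in>Bij (set is) S. F (g(k := chi0)))"
    proof (simp only: sum_distrib_left, rule sum.cong[OF refl])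
      fix g
      have "F (g(k := chi0)) = (\<Prod>s\<in>insert k (set is). (g(k := chi0)) s (\<sigma> s))"
        unfolding F_def ins ..
      also have "\<dots> = chi0 (\<sigma> k) * (\<Prod>s\<in>set is. (g(k := chi0)) s (\<sigma> s))"
        using kn by (simp add: prod.insert)
      also have "(\<Prod>s\<in>set is. (g(k := chi0)) s (\<sigma> s)) = (\<Prod>s\<in>set is. g s (\<sigma> s))"
        by (rule prod.cong[OF refl]) (use kn in auto)
      finally show "chi0 (\<sigma> k) * (\<Prod>j\<in>set is. g j (\<sigma> j)) = F (g(k := chi0))" by (rule sym)
    qed
    also have "\<dots> = (\<Sum>f\<in>(\<lambda>g. g(k := chi0)) ` Bij (set is) S. F f)"
      by (rule sum.reindex[symmetric, OF Bij_inj[OF kn], unfolded comp_def])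
    also have "(\<lambda>g. g(k := chi0)) ` Bij (set is) S = {f \<in> Bij {1..n} A. f k = chi0}"
      unfolding ins S_def by (rule Bij_split[OF kn c0A, symmetric])
    finally show ?thesis .
  qed
  define is1 where "is1 = [1..<n-1] @ [n]"
  define is2 where "is2 = [1..<n-1] @ [n-1]"
  have is1: "distinct is1" "set is1 = {1..n} - {n-1}" using n2 by (auto simp: is1_def)
  have is2: "distinct is2" "set is2 = {1..n} - {n}" using n2 by (auto simp: is2_def)
  have upt: "[1..<n+1] = [1..<n-1] @ [n-1, n]"
  proof -
    define m where "m = n - 2"
    have nm: "n = Suc (Suc m)" using n2 unfolding m_def by arith
    show ?thesis unfolding nm by simp
  qed
  have ys: "\<forall>x\<in>set (map \<sigma> [1..<n-1]). x \<in> carrier G" using sig by auto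
  have sn1: "\<sigma> (n-1) \<in> carrier G" and sn: "\<sigma> n \<in> carrier G" using sig n2 by auto
  have allc: "\<forall>x\<in>set (map \<sigma> [1..<n+1]). x \<in> carrier G"
  proof
    fix x assume "x \<in> set (map \<sigma> [1..<n+1])"
    then have "x \<in> \<sigma> ` set [1..<n+1]" by (simp only: set_map)
    then obtain s where s: "s \<in> set [1..<n+1]" "x = \<sigma> s" by (rule imageE)
    have "s \<in> {1..<n+1}" using s(1) by (simp only: set_upt)
    then have "s \<in> {1..n}" by simp
    then show "x \<in> carrier G" using sig s(2) by simp
  qed
  have xcar: "nested_comm G (map \<sigma> [1..<n+1]) \<in> carrier G"
    by (rule nested_carrier_gen[OF grp allc])
  have psix: "\<psi> (nested_comm G (map \<sigma> [1..<n+1])) =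
     (Dl S (map wof [1..<n-1]) (\<lambda>z. Dop S (wof n) (pof (n-1)) z + Dop S (wof (n-1)) (pof n) z), (\<lambda>_. 0))"
    unfolding upt using psi_nested[OF ys sn1 sn] by (simp add: wof_def pof_def comp_def)
  have "phi S S \<psi> (nested_comm G (map \<sigma> [1..<n+1])) = co S (fst (\<psi> (nested_comm G (map \<sigma> [1..<n+1])))) S"
    unfolding phi_def by (rule coeff_t_co[OF finS]) (use psi_carrier[OF xcar] in auto)
  also have "\<dots> = co S (Dl S (map wof is1) (pof (n-1))) S + co S (Dl S (map wof is2) (pof n)) S"
    unfolding psix by (simp add: Dl_add co_add Dl_snoc is1_def is2_def)
  also have "\<dots> = (\<Sum>f\<in>{f \<in> Bij {1..n} A. f (n-1) = chi0}. F f) + (\<Sum>f\<in>{f \<in> Bij {1..n} A. f n = chi0}. F f)"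
    using key[OF _ is1] key[OF _ is2] n2 by simp
  also have "\<dots> = (\<Sum>f\<in>{f \<in> Bij {1..n} A. f (n-1) = chi0} \<union> {f \<in> Bij {1..n} A. f n = chi0}. F f)"
  proof (rule sum.union_disjoint[symmetric])
    show "finite {f \<in> Bij {1..n} A. f (n-1) = chi0}" "finite {f \<in> Bij {1..n} A. f n = chi0}"
      using finite_Bij[OF _ finA, of "{1..n}"] by auto
    show "{f \<in> Bij {1..n} A. f (n-1) = chi0} \<inter> {f \<in> Bij {1..n} A. f n = chi0} = {}"
    proof (rule ccontr)
      assume "\<not> ?thesis"
      then obtain f where f: "f \<in> Bij {1..n} A" "f (n-1) = chi0" "f n = chi0" by blast
      have "bij_betw f {1..n} A" using f(1) unfolding Bij_def by simp
      then have "inj_on f {1..n}" by (rule bij_betw_imp_inj_on)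
      moreover have "n - 1 \<in> {1..n}" "n \<in> {1..n}" using n2 by auto
      ultimately have "n - 1 = n" using f by (metis inj_onD)
      then show False using n2 by simp
    qed
  qed
  also have "{f \<in> Bij {1..n} A. f (n-1) = chi0} \<union> {f \<in> Bij {1..n} A. f n = chi0} =
      {f \<in> {1..n} \<rightarrow>\<^sub>E A. bij_betw f {1..n} A \<and> (f (n - 1) = chi0 \<or> f n = chi0)}"
    unfolding Bij_def by blast
  finally show ?thesis unfolding S_def n_def F_def .
qed

end
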